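(* Let $\Lambda:\mathbb{R}\to[0,1]$ be a right-continuous decreasing function and define $T_\Lambda:\mathbb{R}\times\mathbb{R}\times L^\infty\to(-\infty,\infty]$ by $$T_\Lambda(a,x,X)=\mathbb E\left[a+\frac{1}{1-\Lambda(x)}(X-a)_+\right]\vee x.$$ Then $$\mathrm{ES}_\Lambda(X)=\min_{(a,x)\in\mathbb{R}^2}T_\Lambda(a,x,X),\quad X\in L^\infty,$$ where the minimum is attained at $x^*=\mathrm{ES}_\Lambda(X)$ and any $a^*\in[\mathrm{VaR}_{\Lambda(x^* )}(X),\mathrm{VaR}^+_{\Lambda(x^* )}(X)]$ if $\Lambda(x^* )\in[0,1)$, or $a^*=\mathrm{VaR}_1(X)$ if $\Lambda(x^* )=1$. Moreover: (i) $T_\Lambda(a,x,X)$ is jointly convex in $(a,X)\in\mathbb{R}\times L^\infty$ for every $x\in\mathbb{R}$; (ii) $T_\Lambda(a,x,X)$ is convex in $x\in\mathbb{R}$ for all $(a,X)\in\mathbb{R}\times L^\infty$ if and only if $x\mapsto1/(1-\Lambda(x))$ is convex; (iii) the following are equivalent: (a) $T_\Lambda$ is jointly convex in $(a,x)\in\mathbb{R}^2$ for all $X\in L^\infty$; (b) $T_\Lambda$ is jointly quasi-convex in $(a,x)\in\mathbb{R}^2$ for all $X\in L^\infty$; (c) $T_\Lambda$ is jointly convex in $(a,x,X)\in\mathbb{R}\times\mathbb{R}\times L^\infty$; (d) $T_\Lambda$ is jointly quasi-convex in $(a,x,X)\in\mathbb{R}\times\mathbb{R}\times L^\infty$; (e)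 $\Lambda$ is constant on $\mathbb{R}$.
   Context: $(\Omega,\mathcal F,\mathbb P)$ is an atomless probability space, $L^0$ all random variables, $L^\infty$ essentially bounded ones; "decreasing" is weak; $\wedge=\min$, $\vee=\max$, $y_+=\max\{y,0\}$. In $\frac{1}{1-\Lambda(x)}\mathbb E[(X-a)_+]$ the conventions $0/0=0$ and $c/0=\infty$ for $c>0$ are used. For $\alpha\in[0,1]$, $X\in L^0$: $\mathrm{VaR}_\alpha(X)=\inf\{x\in\mathbb{R}:\mathbb P(X\le x)\ge\alpha\}$, $\mathrm{VaR}^+_\alpha(X)=\inf\{x\in\mathbb{R}:\mathbb P(X\le x)>\alpha\}$. For $X\in L^\infty$: $\mathrm{ES}_\alpha(X)=\frac{1}{1-\alpha}\int_\alpha^1\mathrm{VaR}_\beta(X)\,\mathrm d\beta$ for $\alpha<1$, $\mathrm{ES}_1(X)=\mathrm{VaR}_1(X)$; for decreasing $\Lambda:\mathbb{R}\to[0,1]$, $\mathrm{ES}_\Lambda(X)=\sup_{x\in\mathbb{R}}\left(\mathrm{ES}_{\Lambda(x)}(X)\wedge x\right)$. *)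

theory Defs
  imports "HOL-Probability.Probability"
begin

definition atomless :: "'a measure \<Rightarrow> bool" where
  "atomless M \<longleftrightarrow> (\<forall>A\<in>sets M. measure M A > 0 \<longrightarrow>
      (\<exists>B\<in>sets M. B \<subseteq> A \<and> 0 < measure M B \<and> measure M B < measure M A))"

definition Linf :: "'a measure \<Rightarrow> ('a \<Rightarrow> real) set" where
  "Linf M = {X. X \<in> borel_measurable M \<and> (\<exists>C. AE \<omega> in M. \<bar>X \<omega>\<bar> \<le> C)}"

text \<open>Value-at-Risk (left and right quantiles), with values in the extended reals
  (inf of the empty set is \<infinity>, of an unbounded-below set is -\<infinity>).\<close>
definition VaR :: "'a measure \<Rightarrow> ('a \<Rightarrow> real) \<Rightarrow> real \<Rightarrow> ereal" where
  "VaR M X \<alpha> = Inf {ereal x | x. measure M {\<omega>\<in>space M. X \<omega> \<le> x} \<ge> \<alpha>}"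

definition VaRp :: "'a measure \<Rightarrow> ('a \<Rightarrow> real) \<Rightarrow> real \<Rightarrow> ereal" where
  "VaRp M X \<alpha> = Inf {ereal x | x. measure M {\<omega>\<in>space M. X \<omega> \<le> x} > \<alpha>}"

definition ES :: "'a measure \<Rightarrow> real \<Rightarrow> ('a \<Rightarrow> real) \<Rightarrow> real" where
  "ES M \<alpha> X = (if \<alpha> < 1
     then (1 / (1 - \<alpha>)) * (LBINT \<beta>:{\<alpha>..1}. real_of_ereal (VaR M X \<beta>))
     else real_of_ereal (VaR M X 1))"

definition ES_Lambda :: "'a measure \<Rightarrow> (real \<Rightarrow> real) \<Rightarrow> ('a \<Rightarrow> real) \<Rightarrow> real" where
  "ES_Lambda M \<Lambda> X = (SUP x. min (ES M (\<Lambda> x) X) x)"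

text \<open>T_Lambda(a,x,X) = (a + E[(X-a)_+]/(1-\<Lambda>(x))) \<or> x, with 0/0 = 0 and c/0 = \<infinity>.\<close>
definition T_Lambda :: "'a measure \<Rightarrow> (real \<Rightarrow> real) \<Rightarrow> real \<Rightarrow> real \<Rightarrow> ('a \<Rightarrow> real) \<Rightarrow> ereal" where
  "T_Lambda M \<Lambda> a x X =
     (let e = (\<integral>\<omega>. max (X \<omega> - a) 0 \<partial>M) in
      max (ereal a + (if \<Lambda> x < 1 then ereal (e / (1 - \<Lambda> x))
                      else if e = 0 then 0 else \<infinity>))
          (ereal x))"

definition inv_one_minus :: "(real \<Rightarrow> real) \<Rightarrow> real \<Rightarrow> ereal" where
  "inv_one_minus \<Lambda> x = (if \<Lambda> x < 1 then ereal (1 / (1 - \<Lambda> x)) else \<infinity>)"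

definition ereal_convex :: "(real \<Rightarrow> ereal) \<Rightarrow> bool" where
  "ereal_convex f \<longleftrightarrow> (\<forall>x y t. 0 < t \<and> t < 1 \<longrightarrow>
      f (t * x + (1 - t) * y) \<le> ereal t * f x + ereal (1 - t) * f y)"

end

theory Submission
  imports Defs
begin


locale qctx = prob_space M for M :: "'a measure" +
  fixes X :: "'a \<Rightarrow> real" and C :: real
  assumes Xm[measurable]: "X \<in> borel_measurable M"
    and XC: "AE \<omega> in M. \<bar>X \<omega>\<bar> \<le> C"
begin

definition F :: "real \<Rightarrow> real" where
  "F x = measure M {\<omega>\<in>space M. X \<omega> \<le> x}"

lemma C_nonneg: "0 \<le> C"
proof -
  from AE_E[OF XC] obtain N where "{\<omega>\<in>space M. \<not> \<bar>X \<omega>\<bar> \<le> C} \<subseteq> N" "emeasure M N = 0" "N \<in> sets M" by blast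
  then have "space M \<noteq> N" using emeasure_space_1 by auto
  then obtain \<omega> where "\<omega> \<in> space M" "\<omega> \<notin> N" using \<open>N \<in> sets M\<close> sets.sets_into_space by blast
  then show ?thesis using \<open>{\<omega>\<in>space M. \<not> \<bar>X \<omega>\<bar> \<le> C} \<subseteq> N\<close> by force
qed

lemma F_mono: "x \<le> y \<Longrightarrow> F x \<le> F y"
  unfolding F_def by (intro finite_measure_mono) auto

lemma F_nonneg: "0 \<le> F x" unfolding F_def by simp
lemma F_le1: "F x \<le> 1" unfolding F_def by simp

lemma F_eq1_iff: "F x = 1 \<longleftrightarrow> (AE \<omega> in M. X \<omega> \<le> x)"
  unfolding F_def by (rule prob_Collect_eq_1) measurable

lemma F_top: "C \<le> x \<Longrightarrow> F x = 1"
  unfolding F_eq1_iff using XC by eventually_elim auto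

lemma F_bot: "x < - C \<Longrightarrow> F x = 0"
proof -
  assume x: "x < - C"
  have "AE \<omega> in M. \<not> X \<omega> \<le> x" using XC by eventually_elim (use x in auto)
  then show ?thesis unfolding F_def by (subst prob_Collect_eq_0) auto
qed

lemma F_cdf: "F = cdf (distr M borel X)"
  by (auto simp: F_def cdf_def measure_distr vimage_def Int_def conj_commute intro!: arg_cong[where f="measure M"])

lemma F_rcont: "continuous (at_right x) F"
  unfolding F_cdf by (rule finite_borel_measure.cdf_is_right_cont[OF real_distribution.finite_borel_measure_M]) simp

lemma VaR_eq: "VaR M X \<beta> = Inf (ereal ` {x. \<beta> \<le> F x})"
  unfolding VaR_def F_def by (simp add: setcompr_eq_image)

lemma VaRp_eq: "VaRp M X \<beta> = Inf (ereal ` {x. \<beta> < F x})"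
  unfolding VaRp_def F_def by (simp add: setcompr_eq_image)

lemma VaR_mono: "\<beta> \<le> \<beta>' \<Longrightarrow> VaR M X \<beta> \<le> VaR M X \<beta>'"
  unfolding VaR_eq by (rule Inf_superset_mono) auto

lemma VaR_le_VaRp: "VaR M X \<beta> \<le> VaRp M X \<beta>"
  unfolding VaR_eq VaRp_eq by (rule Inf_superset_mono) auto

lemma VaRp_le_VaR: "\<alpha> < \<beta> \<Longrightarrow> VaRp M X \<alpha> \<le> VaR M X \<beta>"
  unfolding VaR_eq VaRp_eq by (rule Inf_superset_mono) auto

lemma S_bdd: "0 < \<beta> \<Longrightarrow> bdd_below {x. \<beta> \<le> F x}"
  by (rule bdd_belowI[of _ "-C"]) (metis F_bot linorder_not_less mem_Collect_eq)

lemma S_ne: "\<beta> \<le> 1 \<Longrightarrow> {x. \<beta> \<le> F x} \<noteq> {}"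
  using F_top[of C] by (metis empty_iff mem_Collect_eq order_refl)

lemma Inf_S_in:
  assumes "0 < \<beta>" "\<beta> \<le> 1"
  shows "\<beta> \<le> F (Inf {x. \<beta> \<le> F x})"
proof -
  let ?S = "{x. \<beta> \<le> F x}" let ?m = "Inf ?S"
  have ev: "eventually (\<lambda>y. \<beta> \<le> F y) (at_right ?m)"
  proof (rule eventually_at_rightI[of ?m "?m + 1"])
    fix y assume "y \<in> {?m<..<?m + 1}"
    then have "?m < y" by simp
    then obtain s where "s \<in> ?S" "s < y" using cInf_less_iff[OF S_ne[OF assms(2)] S_bdd[OF assms(1)]] by blast
    then show "\<beta> \<le> F y" using F_mono[of s y] by simp
  qed simp
  show ?thesis
    by (rule tendsto_lowerbound[OF F_rcont[unfolded continuous_within] ev]) simp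
qed

definition q :: "real \<Rightarrow> real" where "q \<beta> = real_of_ereal (VaR M X \<beta>)"

lemma q_props:
  assumes "0 < \<beta>" "\<beta> \<le> 1"
  shows "VaR M X \<beta> = ereal (q \<beta>)" "\<And>x. q \<beta> \<le> x \<longleftrightarrow> \<beta> \<le> F x" "\<bar>q \<beta>\<bar> \<le> C"
proof -
  let ?S = "{x. \<beta> \<le> F x}" let ?m = "Inf ?S"
  have e: "VaR M X \<beta> = ereal ?m"
    unfolding VaR_eq using ereal_Inf'[OF S_bdd[OF assms(1)] S_ne[OF assms(2)]] by simp
  then show q: "VaR M X \<beta> = ereal (q \<beta>)" by (simp add: q_def)
  have qm: "q \<beta> = ?m" using e by (simp add: q_def)
  have mS: "\<beta> \<le> F ?m" by (rule Inf_S_in[OF assms])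
  show g: "q \<beta> \<le> x \<longleftrightarrow> \<beta> \<le> F x" for x
  proof
    assume "q \<beta> \<le> x" then show "\<beta> \<le> F x" using mS F_mono qm by (metis order_trans)
  next
    assume "\<beta> \<le> F x" then show "q \<beta> \<le> x" unfolding qm by (intro cInf_lower S_bdd assms) simp
  qed
  have "q \<beta> \<le> C" using g F_top[of C] assms by simp
  moreover have "- C \<le> q \<beta>" using mS qm F_bot[of "q \<beta>"] assms by force
  ultimately show "\<bar>q \<beta>\<bar> \<le> C" by simp
qed

lemma VaR_nonpos: "\<beta> \<le> 0 \<Longrightarrow> VaR M X \<beta> = -\<infinity>"
proof -
  assume "\<beta> \<le> 0"
  then have "{x. \<beta> \<le> F x} = UNIV" using F_nonneg order_trans by blast
  then show "VaR M X \<beta> = -\<infinity>" unfolding VaR_eq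
      by (intro ereal_bot) (auto intro!: Inf_lower)
qed

lemma VaR_gt1: "1 < \<beta> \<Longrightarrow> VaR M X \<beta> = \<infinity>"
proof -
  assume "1 < \<beta>"
  then have "{x. \<beta> \<le> F x} = {}" using F_le1 by (auto simp: not_le intro: le_less_trans)
  then show "VaR M X \<beta> = \<infinity>" unfolding VaR_eq by (simp add: top_ereal_def)
qed

lemma q_bound: "\<bar>q \<beta>\<bar> \<le> C"
proof cases
  assume "0 < \<beta> \<and> \<beta> \<le> 1" then show ?thesis using q_props by blast
next
  assume n: "\<not> (0 < \<beta> \<and> \<beta> \<le> 1)"
  show ?thesis
  proof cases
    assume "\<beta> \<le> 0"
    then have "{x. \<beta> \<le> F x} = UNIV" using F_nonneg order_trans by blast
    then have "VaR M X \<beta> = -\<infinity>" unfolding VaR_eq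
      by (intro ereal_bot) (auto intro!: Inf_lower)
    then show ?thesis using C_nonneg by (simp add: q_def)
  next
    assume "\<not> \<beta> \<le> 0"
    then have "1 < \<beta>" using n by simp
    then have "{x. \<beta> \<le> F x} = {}" using F_le1 by (auto simp: not_le intro: le_less_trans)
    then have "VaR M X \<beta> = \<infinity>" unfolding VaR_eq by (simp add: top_ereal_def)
    then show ?thesis using C_nonneg by (simp add: q_def)
  qed
qed

lemma q_mono: "0 < \<beta> \<Longrightarrow> \<beta> \<le> \<beta>' \<Longrightarrow> \<beta>' \<le> 1 \<Longrightarrow> q \<beta> \<le> q \<beta>'"
  using VaR_mono[of \<beta> \<beta>'] q_props(1)[of \<beta>] q_props(1)[of \<beta>'] by simp

lemma q_meas[measurable]: "q \<in> borel_measurable borel"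
proof (rule borel_measurable_piecewise_mono[of "{{..0}, {0<..1}, {1<..}}"])
  fix c assume "c \<in> {{..0}, {0<..1::real}, {1<..}}"
  then show "mono_on c q"
    by (auto simp: mono_on_def q_def VaR_nonpos VaR_gt1 intro: q_mono[unfolded q_def])
qed auto

definition L :: "real measure" where "L = density lborel (indicator {0<..1})"

lemma sets_L[measurable_cong, simp]: "sets L = sets borel" and space_L[simp]: "space L = UNIV"
  by (simp_all add: L_def)

lemma emeasure_L: "A \<in> sets borel \<Longrightarrow> emeasure L A = emeasure lborel ({0<..1} \<inter> A)"
  unfolding L_def by (rule emeasure_restricted) auto

lemma measure_L: "A \<in> sets borel \<Longrightarrow> measure L A = measure lborel ({0<..1} \<inter> A)"
  unfolding measure_def by (simp add: emeasure_L)

lemma prob_L: "prob_space L"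
  by (rule prob_spaceI) (simp add: emeasure_L)

lemma cdf_q: "cdf (distr L borel q) x = F x"
proof -
  have "cdf (distr L borel q) x = measure L {\<beta>. q \<beta> \<le> x}"
    unfolding cdf_def by (subst measure_distr) (auto simp: vimage_def)
  also have "\<dots> = measure lborel ({0<..1} \<inter> {\<beta>. q \<beta> \<le> x})"
    by (rule measure_L) measurable
  also have "{0<..1} \<inter> {\<beta>. q \<beta> \<le> x} = {0<..F x}"
    using q_props(2) F_le1[of x] by (auto intro: order_trans)
  also have "measure lborel {0<..F x} = F x" using F_nonneg[of x] by simp
  finally show ?thesis .
qed

lemma distr_q: "distr L borel q = distr M borel X"
proof (rule cdf_unique)
  show "real_distribution (distr L borel q)"
    by (rule prob_space.real_distribution_distr[OF prob_L]) simp
  show "real_distribution (distr M borel X)" by simp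
  show "cdf (distr L borel q) = cdf (distr M borel X)"
    using cdf_q F_cdf by auto
qed

lemma expect_q:
  fixes f :: "real \<Rightarrow> real"
  assumes [measurable]: "f \<in> borel_measurable borel"
  shows "(\<integral>\<omega>. f (X \<omega>) \<partial>M) = (LBINT \<beta>:{0<..1}. f (q \<beta>))"
proof -
  have "(\<integral>\<omega>. f (X \<omega>) \<partial>M) = integral\<^sup>L (distr M borel X) f"
    by (subst integral_distr) auto
  also have "\<dots> = integral\<^sup>L (distr L borel q) f" by (simp add: distr_q)
  also have "\<dots> = integral\<^sup>L L (\<lambda>\<beta>. f (q \<beta>))" by (simp add: integral_distr)
  also have "\<dots> = (LBINT \<beta>:{0<..1}. f (q \<beta>))"
  proof -
    have eq: "L = density lborel (\<lambda>x. ennreal (indicator {0<..1::real} x))"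
      by (simp add: L_def ennreal_indicator)
    show ?thesis
      unfolding set_lebesgue_integral_def eq by (subst integral_density) auto
  qed
  finally show ?thesis .
qed

lemma si_bounded:
  fixes f :: "real \<Rightarrow> real"
  assumes [measurable]: "f \<in> borel_measurable borel" and B: "\<And>x. \<bar>f x\<bar> \<le> B"
    and [measurable]: "A \<in> sets borel" and sub: "A \<subseteq> {a..b}"
  shows "set_integrable lborel A f"
  unfolding set_integrable_def
proof (rule integrableI_bounded_set_indicator[where B=B])
  have "emeasure lborel A \<le> emeasure lborel {a..b}" by (rule emeasure_mono[OF sub]) simp
  moreover have "emeasure lborel {a..b} < \<infinity>" by (cases "a \<le> b") auto
  ultimately show "emeasure lborel A < \<infinity>" by (simp add: le_less_trans)
qed (use B in auto)

lemma set_int_nonneg: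
  fixes f :: "real \<Rightarrow> real"
  shows "(\<And>x. x \<in> A \<Longrightarrow> 0 \<le> f x) \<Longrightarrow> 0 \<le> (LINT x:A|lborel. f x)"
  unfolding set_lebesgue_integral_def by (intro integral_nonneg_AE) (auto simp: indicator_def)

definition e :: "real \<Rightarrow> real" where "e a = (\<integral>\<omega>. max (X \<omega> - a) 0 \<partial>M)"

lemma e_q: "e a = (LBINT \<beta>:{0<..1}. max (q \<beta> - a) 0)"
  unfolding e_def by (rule expect_q) simp

lemma si_q: "A \<in> sets borel \<Longrightarrow> A \<subseteq> {0..1} \<Longrightarrow> set_integrable lborel A q"
  by (rule si_bounded[where B=C]) (auto simp: q_bound)

lemma si_qa: "A \<in> sets borel \<Longrightarrow> A \<subseteq> {0..1} \<Longrightarrow> set_integrable lborel A (\<lambda>\<beta>. max (q \<beta> - a) 0)"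
proof (rule si_bounded[where B="C + \<bar>a\<bar>"])
  show "\<bar>max (q x - a) 0\<bar> \<le> C + \<bar>a\<bar>" for x using q_bound[of x] C_nonneg by (simp add: abs_le_iff) linarith
qed auto

lemma si_qa': "A \<in> sets borel \<Longrightarrow> A \<subseteq> {0..1} \<Longrightarrow> set_integrable lborel A (\<lambda>\<beta>. q \<beta> - a)"
proof (rule si_bounded[where B="C + \<bar>a\<bar>"])
  show "\<bar>q x - a\<bar> \<le> C + \<bar>a\<bar>" for x using q_bound[of x] C_nonneg by (simp add: abs_le_iff) linarith
qed auto

lemma si_const: "(A::real set) \<in> sets borel \<Longrightarrow> A \<subseteq> {0..1} \<Longrightarrow> set_integrable lborel A (\<lambda>\<beta>. c::real)"
proof -
  assume "A \<in> sets borel" "A \<subseteq> {0..1}"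
  then show ?thesis using si_bounded[of "\<lambda>\<beta>. c" "\<bar>c\<bar>" A 0 1] by auto
qed

lemma e_split:
  assumes "0 \<le> \<alpha>" "\<alpha> \<le> 1"
  shows "e a = (LBINT \<beta>:{0<..\<alpha>}. max (q \<beta> - a) 0) + (LBINT \<beta>:{\<alpha><..1}. max (q \<beta> - a) 0)"
proof -
  have "{0<..1} = {0<..\<alpha>} \<union> {\<alpha><..1}" using assms by auto
  then show ?thesis unfolding e_q
    by (simp only:) (rule set_integral_Un, auto intro!: si_qa)
qed

lemma int_Icc_Ioc:
  assumes "0 \<le> \<alpha>"
  shows "(LBINT \<beta>:{\<alpha>..1}. q \<beta>) = (LBINT \<beta>:{\<alpha><..1}. q \<beta>)"
  by (rule set_integral_cong_set)
     (auto simp: set_borel_measurable_def intro!: eventually_mono[OF AE_lborel_singleton[of \<alpha>]])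

lemma int_Ioc_split:
  assumes "0 \<le> \<alpha>" "\<alpha> \<le> 1"
  shows "(LBINT \<beta>:{\<alpha><..1}. q \<beta>) = (LBINT \<beta>:{\<alpha><..1}. q \<beta> - a) + (1 - \<alpha>) * a"
proof -
  have "(LBINT \<beta>:{\<alpha><..1}. q \<beta> - a) = (LBINT \<beta>:{\<alpha><..1}. q \<beta>) - (LBINT \<beta>:{\<alpha><..1}. a)"
    using assms by (intro set_integral_diff si_q si_const) auto
  moreover have "(LBINT \<beta>:{\<alpha><..1}. a) = (1 - \<alpha>) * a"
    using assms by (subst set_integral_const) auto
  ultimately show ?thesis by simp
qed

lemma RU_le:
  assumes "0 \<le> \<alpha>" "\<alpha> \<le> 1"
  shows "(LBINT \<beta>:{\<alpha>..1}. q \<beta>) \<le> (1 - \<alpha>) * a + e a"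
proof -
  have "(LBINT \<beta>:{\<alpha><..1}. q \<beta> - a) \<le> (LBINT \<beta>:{\<alpha><..1}. max (q \<beta> - a) 0)"
    using assms by (intro set_integral_mono si_qa si_qa') auto
  moreover have "0 \<le> (LBINT \<beta>:{0<..\<alpha>}. max (q \<beta> - a) 0)"
    by (rule set_int_nonneg) simp
  ultimately show ?thesis
    using int_Icc_Ioc[OF assms(1)] int_Ioc_split[OF assms, of a] e_split[OF assms, of a] by linarith
qed

lemma RU_eq:
  assumes "0 \<le> \<alpha>" "\<alpha> \<le> 1" "VaR M X \<alpha> \<le> ereal a" "ereal a \<le> VaRp M X \<alpha>"
  shows "(LBINT \<beta>:{\<alpha>..1}. q \<beta>) = (1 - \<alpha>) * a + e a"
proof -
  have "(LBINT \<beta>:{\<alpha><..1}. max (q \<beta> - a) 0) = (LBINT \<beta>:{\<alpha><..1}. q \<beta> - a)"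
  proof (intro set_lebesgue_integral_cong allI impI)
    fix \<beta> :: real assume b: "\<beta> \<in> {\<alpha><..1}"
    then have "ereal a \<le> VaR M X \<beta>" using VaRp_le_VaR[of \<alpha> \<beta>] assms(4) by auto
    then have "a \<le> q \<beta>" using q_props(1)[of \<beta>] b assms by auto
    then show "max (q \<beta> - a) 0 = q \<beta> - a" by simp
  qed simp
  moreover have "(LBINT \<beta>:{0<..\<alpha>}. max (q \<beta> - a) 0) = (LBINT \<beta>:{0<..\<alpha>}. 0)"
  proof (intro set_lebesgue_integral_cong allI impI)
    fix \<beta> :: real assume b: "\<beta> \<in> {0<..\<alpha>}"
    then have "VaR M X \<beta> \<le> ereal a" using VaR_mono[of \<beta> \<alpha>] assms(3) by auto
    then have "q \<beta> \<le> a" using q_props(1)[of \<beta>] b assms by auto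
    then show "max (q \<beta> - a) 0 = 0" by simp
  qed simp
  ultimately show ?thesis
    using int_Icc_Ioc[OF assms(1)] int_Ioc_split[OF assms(1,2), of a] e_split[OF assms(1,2), of a]
    by (simp add: set_lebesgue_integral_def)
qed

lemma ES_int: "\<alpha> < 1 \<Longrightarrow> ES M \<alpha> X = (1 / (1 - \<alpha>)) * (LBINT \<beta>:{\<alpha>..1}. q \<beta>)"
  unfolding ES_def q_def by simp

lemma ES_1: "ES M 1 X = q 1"
  unfolding ES_def q_def by simp

lemma ES_le: "0 \<le> \<alpha> \<Longrightarrow> \<alpha> < 1 \<Longrightarrow> ES M \<alpha> X \<le> a + e a / (1 - \<alpha>)"
proof -
  assume a: "0 \<le> \<alpha>" "\<alpha> < 1"
  have "(LBINT \<beta>:{\<alpha>..1}. q \<beta>) / (1 - \<alpha>) \<le> ((1 - \<alpha>) * a + e a) / (1 - \<alpha>)"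
    using RU_le[of \<alpha> a] a by (intro divide_right_mono) auto
  also have "\<dots> = a + e a / (1 - \<alpha>)" using a by (simp add: field_simps)
  finally show ?thesis using a by (simp add: ES_int)
qed

lemma ES_eq: "0 \<le> \<alpha> \<Longrightarrow> \<alpha> < 1 \<Longrightarrow> VaR M X \<alpha> \<le> ereal a \<Longrightarrow> ereal a \<le> VaRp M X \<alpha>
   \<Longrightarrow> ES M \<alpha> X = a + e a / (1 - \<alpha>)"
proof -
  assume a: "0 \<le> \<alpha>" "\<alpha> < 1" "VaR M X \<alpha> \<le> ereal a" "ereal a \<le> VaRp M X \<alpha>"
  have "(LBINT \<beta>:{\<alpha>..1}. q \<beta>) / (1 - \<alpha>) = ((1 - \<alpha>) * a + e a) / (1 - \<alpha>)"
    using RU_eq[of \<alpha> a] a by simp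
  also have "\<dots> = a + e a / (1 - \<alpha>)" using a by (simp add: field_simps)
  finally show ?thesis using a by (simp add: ES_int)
qed

lemma integrable_pp: "integrable M (\<lambda>\<omega>. max (X \<omega> - a) 0)"
  by (rule integrable_const_bound[where B="C + \<bar>a\<bar>"]) (use XC in \<open>eventually_elim, auto\<close>)

lemma e_nonneg: "0 \<le> e a"
  unfolding e_def by (rule integral_nonneg_AE) auto

lemma e_zero_iff: "e a = 0 \<longleftrightarrow> (AE \<omega> in M. X \<omega> \<le> a)"
proof -
  have "e a = 0 \<longleftrightarrow> (AE \<omega> in M. max (X \<omega> - a) 0 = 0)"
    unfolding e_def by (rule integral_nonneg_eq_0_iff_AE[OF integrable_pp]) auto
  also have "\<dots> \<longleftrightarrow> (AE \<omega> in M. X \<omega> \<le> a)" by (intro AE_cong) auto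
  finally show ?thesis .
qed

lemma q1_le: "(AE \<omega> in M. X \<omega> \<le> a) \<Longrightarrow> q 1 \<le> a"
  using q_props(2)[of 1 a] F_eq1_iff[of a] by simp

lemma AE_le_q1: "AE \<omega> in M. X \<omega> \<le> q 1"
  using q_props(2)[of 1 "q 1"] F_eq1_iff[of "q 1"] F_le1[of "q 1"] by simp

lemma ES_ge_q:
  assumes "0 < \<beta>" "\<beta> < 1"
  shows "q \<beta> \<le> ES M \<beta> X"
proof -
  have "(LBINT x:{\<beta>..1}. q \<beta>) \<le> (LBINT x:{\<beta>..1}. q x)"
    using assms by (intro set_integral_mono si_q si_const q_mono) auto
  moreover have "(LBINT x:{\<beta>..1}. q \<beta>) = (1 - \<beta>) * q \<beta>"
    using assms by (subst set_integral_const) auto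
  ultimately show ?thesis using assms by (simp add: ES_int field_simps)
qed

lemma ES_left:
  assumes "0 \<le> \<beta>" "\<beta> \<le> l" "l < 1"
  shows "(1 - l) * ES M l X - (l - \<beta>) * C \<le> (1 - \<beta>) * ES M \<beta> X"
proof -
  have un: "{\<beta>..1} = {\<beta>..<l} \<union> {l..1}" using assms by auto
  have "(LBINT x:{\<beta>..1}. q x) = (LBINT x:{\<beta>..<l}. q x) + (LBINT x:{l..1}. q x)"
    unfolding un using assms by (intro set_integral_Un si_q) auto
  moreover have "(LBINT x:{\<beta>..<l}. - C) \<le> (LBINT x:{\<beta>..<l}. q x)"
  proof -
    have "\<And>x. -C \<le> q x" using q_bound by (metis abs_le_iff minus_le_iff)
    then show ?thesis using assms by (intro set_integral_mono si_q si_const) auto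
  qed
  moreover have "(LBINT x:{\<beta>..<l}. - C) = - (l - \<beta>) * C"
    using assms by (subst set_integral_const) (auto simp: algebra_simps)
  moreover have "(1 - \<beta>) * ES M \<beta> X = (LBINT x:{\<beta>..1}. q x)" using assms by (simp add: ES_int)
  moreover have "(1 - l) * ES M l X = (LBINT x:{l..1}. q x)" using assms by (simp add: ES_int)
  ultimately show ?thesis by linarith
qed

lemma VaRp_finite:
  assumes "0 \<le> \<alpha>" "\<alpha> < 1"
  shows "VaRp M X \<alpha> = ereal (real_of_ereal (VaRp M X \<alpha>))"
proof -
  have bdd: "bdd_below {x. \<alpha> < F x}"
    by (rule bdd_belowI[of _ "-C"]) (metis F_bot assms(1) linorder_not_less mem_Collect_eq)
  have ne: "{x. \<alpha> < F x} \<noteq> {}" using F_top[of C] assms by (auto intro!: exI[of _ C])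
  show ?thesis unfolding VaRp_eq using ereal_Inf'[OF bdd ne] by (metis real_of_ereal.simps(1))
qed

end


lemma T_less1: "\<Lambda> x < 1 \<Longrightarrow> T_Lambda M \<Lambda> a x X = ereal (max (a + (\<integral>\<omega>. max (X \<omega> - a) 0 \<partial>M) / (1 - \<Lambda> x)) x)"
  unfolding T_Lambda_def Let_def by simp

lemma T_not_less1: "\<not> \<Lambda> x < 1 \<Longrightarrow> T_Lambda M \<Lambda> a x X =
   (if (\<integral>\<omega>. max (X \<omega> - a) 0 \<partial>M) = 0 then ereal (max a x) else \<infinity>)"
  unfolding T_Lambda_def Let_def by simp

lemma T_ge_x: "ereal x \<le> T_Lambda M \<Lambda> a x X"
  unfolding T_Lambda_def Let_def by simp

locale lctx = qctx +
  fixes \<Lambda> :: "real \<Rightarrow> real"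
  assumes range: "\<And>x. 0 \<le> \<Lambda> x \<and> \<Lambda> x \<le> 1"
    and decr: "antimono \<Lambda>"
    and rcont: "\<And>x. continuous (at_right x) \<Lambda>"
begin

lemma T_less1': "\<Lambda> x < 1 \<Longrightarrow> T_Lambda M \<Lambda> a x X = ereal (max (a + e a / (1 - \<Lambda> x)) x)"
  using T_less1 e_def by metis

lemma T_not_less1': "\<not> \<Lambda> x < 1 \<Longrightarrow> T_Lambda M \<Lambda> a x X = (if e a = 0 then ereal (max a x) else \<infinity>)"
  using T_not_less1 e_def by metis

lemma minle_T: "ereal (min (ES M (\<Lambda> y) X) y) \<le> T_Lambda M \<Lambda> a x X"
proof (cases "y \<le> x")
  case True
  then have "min (ES M (\<Lambda> y) X) y \<le> x" by simp
  then have "ereal (min (ES M (\<Lambda> y) X) y) \<le> ereal x" by (metis ereal_less_eq(3))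
  then show ?thesis using T_ge_x order_trans by blast
next
  case False
  then have yx: "\<Lambda> y \<le> \<Lambda> x" using decr by (simp add: antimonoD)
  show ?thesis
  proof (cases "\<Lambda> x < 1")
    case True
    then have "\<Lambda> y < 1" using yx by simp
    then have "ES M (\<Lambda> y) X \<le> a + e a / (1 - \<Lambda> y)" using ES_le range by blast
    also have "\<dots> \<le> a + e a / (1 - \<Lambda> x)"
      using yx True e_nonneg[of a] by (intro add_left_mono divide_left_mono) auto
    finally have "min (ES M (\<Lambda> y) X) y \<le> max (a + e a / (1 - \<Lambda> x)) x" by linarith
    then show ?thesis using True T_less1'[of x a] by (metis ereal_less_eq(3))
  next
    case False
    show ?thesis
    proof (cases "e a = 0")
      case ez: True
      then have ae: "AE \<omega> in M. X \<omega> \<le> a" using e_zero_iff by simp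
      have "ES M (\<Lambda> y) X \<le> a"
      proof (cases "\<Lambda> y < 1")
        case True
        then show ?thesis using ES_le[of "\<Lambda> y" a] range ez by simp
      next
        case False
        then have "\<Lambda> y = 1" using range[of y] by simp
        then show ?thesis using ES_1 q1_le[OF ae] by simp
      qed
      then have "min (ES M (\<Lambda> y) X) y \<le> max a x" by linarith
      then show ?thesis using False ez T_not_less1'[of x a] by (metis ereal_less_eq(3))
    qed (use False in \<open>simp add: T_not_less1'\<close>)
  qed
qed

lemma bdd: "bdd_above (range (\<lambda>y. min (ES M (\<Lambda> y) X) y))"
proof (rule bdd_aboveI2)
  fix y
  have ae: "AE \<omega> in M. X \<omega> \<le> C" using XC by eventually_elim auto
  then have "e C = 0" using e_zero_iff by simp
  then have "T_Lambda M \<Lambda> C C X = ereal C"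
    by (cases "\<Lambda> C < 1") (simp_all add: T_less1' T_not_less1')
  then show "min (ES M (\<Lambda> y) X) y \<le> C" using minle_T[of y C C] by (metis ereal_less_eq(3))
qed

abbreviation "xs \<equiv> ES_Lambda M \<Lambda> X"

lemma ESL_le_T: "ereal xs \<le> T_Lambda M \<Lambda> a x X"
proof (cases "T_Lambda M \<Lambda> a x X")
  case (real r)
  have "xs \<le> r" unfolding ES_Lambda_def
  proof (rule cSUP_least)
    fix y show "min (ES M (\<Lambda> y) X) y \<le> r" using minle_T[of y a x] real by (metis ereal_less_eq(3))
  qed simp
  then show ?thesis using real by simp
next
  case PInf then show ?thesis by simp
next
  case MInf then show ?thesis using T_ge_x[of x M \<Lambda> a X] by simp
qed

lemma min_le_ESL: "min (ES M (\<Lambda> y) X) y \<le> xs"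
  unfolding ES_Lambda_def by (rule cSUP_upper[OF _ bdd]) simp

lemma ES_le_xs: "xs < y \<Longrightarrow> ES M (\<Lambda> y) X \<le> xs"
  using min_le_ESL[of y] by linarith

lemma get_y:
  assumes "0 < \<epsilon>"
  obtains y where "x0 < y" "\<bar>\<Lambda> y - \<Lambda> x0\<bar> < \<epsilon>"
proof -
  have "eventually (\<lambda>y. dist (\<Lambda> y) (\<Lambda> x0) < \<epsilon>) (at_right x0)"
    using rcont[of x0] assms unfolding continuous_within by (rule tendstoD)
  moreover have "eventually (\<lambda>y. x0 < y) (at_right x0)" by (rule eventually_at_right_less)
  ultimately have "eventually (\<lambda>y. x0 < y \<and> \<bar>\<Lambda> y - \<Lambda> x0\<bar> < \<epsilon>) (at_right x0)"
    by eventually_elim (auto simp: dist_real_def)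
  then have "\<exists>y. x0 < y \<and> \<bar>\<Lambda> y - \<Lambda> x0\<bar> < \<epsilon>"
    using eventually_happens trivial_limit_at_right_real by blast
  then show ?thesis using that by blast
qed

lemma B1:
  assumes l1: "\<Lambda> xs < 1"
  shows "ES M (\<Lambda> xs) X \<le> xs"
proof (rule ccontr)
  assume nt: "\<not> ES M (\<Lambda> xs) X \<le> xs"
  define l where "l = \<Lambda> xs"
  define \<delta> where "\<delta> = ES M l X - xs"
  have d: "0 < \<delta>" using nt by (simp add: \<delta>_def l_def)
  define K where "K = \<bar>C + xs\<bar> + 1"
  have K: "0 < K" "C + xs \<le> K" by (auto simp: K_def)
  define \<epsilon> where "\<epsilon> = (1 - l) * \<delta> / K"
  have l1': "l < 1" "0 \<le> l" using l1 range by (auto simp: l_def)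
  have eps: "0 < \<epsilon>" using K d l1' by (simp add: \<epsilon>_def)
  obtain y where y: "xs < y" "\<bar>\<Lambda> y - l\<bar> < \<epsilon>" using get_y[OF eps, of xs] l_def by blast
  define \<beta> where "\<beta> = \<Lambda> y"
  have b: "\<beta> \<le> l" "0 \<le> \<beta>" "l - \<beta> < \<epsilon>" using y decr range
    by (auto simp: \<beta>_def l_def antimonoD)
  have Eb: "ES M \<beta> X \<le> xs" using ES_le_xs[OF y(1)] by (simp add: \<beta>_def)
  have h0: "(1 - l) * ES M l X - (l - \<beta>) * C \<le> (1 - \<beta>) * ES M \<beta> X"
    using ES_left[OF b(2,1) l1'(1)] .
  have h1: "(1 - \<beta>) * ES M \<beta> X \<le> (1 - \<beta>) * xs"
    using Eb b l1' by (intro mult_left_mono) auto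
  have h2: "(l - \<beta>) * (C + xs) \<le> (l - \<beta>) * K"
    using K b by (intro mult_left_mono) auto
  have h3: "(l - \<beta>) * K < \<epsilon> * K"
    using K b by (intro mult_strict_right_mono) auto
  have h4: "\<epsilon> * K = (1 - l) * \<delta>" using K by (simp add: \<epsilon>_def)
  have h5: "(1 - l) * \<delta> = (1 - l) * ES M l X - (1 - l) * xs" by (simp add: \<delta>_def algebra_simps)
  have h6: "(1 - \<beta>) * xs = (1 - l) * xs + (l - \<beta>) * xs" by (simp add: algebra_simps)
  have h7: "(l - \<beta>) * (C + xs) = (l - \<beta>) * C + (l - \<beta>) * xs" by (simp add: algebra_simps)
  show False using h0 h1 h2 h3 h4 h5 h6 h7 by linarith
qed

lemma B2:
  assumes l1: "\<not> \<Lambda> xs < 1"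
  shows "q 1 \<le> xs"
proof (rule ccontr)
  assume "\<not> ?thesis"
  then have lt: "xs < q 1" by simp
  define r where "r = (xs + q 1) / 2"
  have r: "xs < r" "r < q 1" using lt by (auto simp: r_def)
  have Fr: "F r < 1"
  proof (rule ccontr)
    assume "\<not> F r < 1"
    then have "q 1 \<le> r" using q_props(2)[of 1 r] by simp
    then show False using r by simp
  qed
  have eps: "0 < 1 - F r" using Fr by simp
  have lx: "\<Lambda> xs = 1" using l1 range[of xs] by simp
  obtain y where y: "xs < y" "\<bar>\<Lambda> y - \<Lambda> xs\<bar> < 1 - F r" using get_y[OF eps, of xs] by blast
  have hby: "F r < \<Lambda> y" using y lx by simp
  show False
  proof (cases "\<Lambda> y < 1")
    case True
    have b0: "0 < \<Lambda> y" using hby F_nonneg[of r] by linarith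
    have "\<not> q (\<Lambda> y) \<le> r" using q_props(2)[of "\<Lambda> y" r] b0 True hby by simp
    moreover have "q (\<Lambda> y) \<le> ES M (\<Lambda> y) X" using ES_ge_q b0 True by simp
    moreover have "ES M (\<Lambda> y) X \<le> xs" using ES_le_xs[OF y(1)] .
    ultimately show False using r by simp
  next
    case False
    then have "\<Lambda> y = 1" using range[of y] by simp
    then have "ES M (\<Lambda> y) X = q 1" using ES_1 by simp
    then show False using min_le_ESL[of y] y lt by simp
  qed
qed

lemma main_part:
  "(\<forall>a x. ereal xs \<le> T_Lambda M \<Lambda> a x X)
      \<and> (\<exists>a x. T_Lambda M \<Lambda> a x X = ereal xs)
      \<and> (\<Lambda> xs < 1 \<longrightarrow>
           (\<forall>a. VaR M X (\<Lambda> xs) \<le> ereal a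
                \<and> ereal a \<le> VaRp M X (\<Lambda> xs) \<longrightarrow>
                T_Lambda M \<Lambda> a xs X = ereal xs))
      \<and> (\<Lambda> xs = 1 \<longrightarrow>
           T_Lambda M \<Lambda> (real_of_ereal (VaR M X 1)) xs X = ereal xs)"
proof -
  have c3: "T_Lambda M \<Lambda> a xs X = ereal xs"
    if l: "\<Lambda> xs < 1" and a: "VaR M X (\<Lambda> xs) \<le> ereal a" "ereal a \<le> VaRp M X (\<Lambda> xs)" for a
  proof -
    have "ES M (\<Lambda> xs) X = a + e a / (1 - \<Lambda> xs)" using ES_eq[OF _ l a] range by simp
    then show ?thesis using B1[OF l] l by (simp add: T_less1')
  qed
  have c4: "T_Lambda M \<Lambda> (real_of_ereal (VaR M X 1)) xs X = ereal xs" if l: "\<Lambda> xs = 1"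
  proof -
    have "e (q 1) = 0" using e_zero_iff AE_le_q1 by simp
    then show ?thesis using B2 l by (simp add: T_not_less1' q_def[symmetric])
  qed
  have c2: "\<exists>a x. T_Lambda M \<Lambda> a x X = ereal xs"
  proof (cases "\<Lambda> xs < 1")
    case True
    let ?a = "real_of_ereal (VaRp M X (\<Lambda> xs))"
    have fin: "VaRp M X (\<Lambda> xs) = ereal ?a" using VaRp_finite True range by blast
    have "VaR M X (\<Lambda> xs) \<le> ereal ?a" "ereal ?a \<le> VaRp M X (\<Lambda> xs)"
      using VaR_le_VaRp[of "\<Lambda> xs"] fin by simp_all
    then show ?thesis using c3[OF True] by blast
  next
    case False
    then show ?thesis using c4 range[of xs] by force
  qed
  show ?thesis using ESL_le_T c2 c3 c4 by blast
qed

end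


lemma conv_top1: "0 < t \<Longrightarrow> t < 1 \<Longrightarrow> B \<noteq> -\<infinity> \<Longrightarrow> ereal t * \<infinity> + ereal (1 - t) * B = \<infinity>"
  by (cases B) auto

lemma conv_top2: "0 < t \<Longrightarrow> t < 1 \<Longrightarrow> A \<noteq> -\<infinity> \<Longrightarrow> ereal t * A + ereal (1 - t) * \<infinity> = \<infinity>"
  by (cases A) auto

lemma conv_real: "ereal t * ereal A + ereal (1 - t) * ereal B = ereal (t * A + (1 - t) * B)"
  by simp

lemma conv_le_max:
  assumes "0 < t" "t < 1" "A \<noteq> -\<infinity>" "B \<noteq> -\<infinity>"
  shows "ereal t * A + ereal (1 - t) * B \<le> max A B"
proof (cases A)
  case (real a)
  show ?thesis
  proof (cases B)
    case (real b)
    have "t * a + (1 - t) * b \<le> max a b"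
    proof -
      have "t * a \<le> t * max a b" "(1 - t) * b \<le> (1 - t) * max a b"
        using assms by (auto intro!: mult_left_mono)
      then show ?thesis by (simp add: algebra_simps)
    qed
    then have "ereal (t * a + (1 - t) * b) \<le> ereal (max a b)" unfolding ereal_less_eq(3) .
    moreover have "ereal (max a b) = max (ereal a) (ereal b)" by (auto simp: max_def)
    ultimately show ?thesis using \<open>A = ereal a\<close> real by simp
  qed (use assms real in auto)
qed (use assms in \<open>auto simp: conv_top1\<close>)

lemma T_not_MInf: "T_Lambda M \<Lambda> a x X \<noteq> -\<infinity>"
  using T_ge_x[of x M \<Lambda> a X] by auto

lemma max_conv:
  fixes t :: real
  assumes "0 < t" "t < 1" "um \<le> t * u1 + (1 - t) * u2" "xm = t * x1 + (1 - t) * x2"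
  shows "max um xm \<le> t * max u1 x1 + (1 - t) * max u2 x2"
proof -
  have "t * u1 \<le> t * max u1 x1" "t * x1 \<le> t * max u1 x1"
    "(1 - t) * u2 \<le> (1 - t) * max u2 x2" "(1 - t) * x2 \<le> (1 - t) * max u2 x2"
    using assms by (auto intro!: mult_left_mono)
  then show ?thesis using assms by (intro max.boundedI) linarith+
qed

context prob_space
begin

lemma Linf_qctx: "X \<in> Linf M \<Longrightarrow> \<exists>C. qctx M X C"
  unfolding Linf_def qctx_def qctx_axioms_def using prob_space_axioms by auto

lemma Linf_int: "X \<in> Linf M \<Longrightarrow> integrable M (\<lambda>\<omega>. max (X \<omega> - a) 0)"
  using Linf_qctx qctx.integrable_pp by blast

lemma Linf_const: "(\<lambda>\<omega>. c) \<in> Linf M"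
  unfolding Linf_def by auto

lemma Linf_mix: "X1 \<in> Linf M \<Longrightarrow> X2 \<in> Linf M \<Longrightarrow> (\<lambda>\<omega>. t * X1 \<omega> + (1 - t) * X2 \<omega>) \<in> Linf M"
proof -
  assume a: "X1 \<in> Linf M" "X2 \<in> Linf M"
  then obtain C1 C2 where c: "AE \<omega> in M. \<bar>X1 \<omega>\<bar> \<le> C1" "AE \<omega> in M. \<bar>X2 \<omega>\<bar> \<le> C2"
    and m: "X1 \<in> borel_measurable M" "X2 \<in> borel_measurable M" unfolding Linf_def by auto
  have "AE \<omega> in M. \<bar>t * X1 \<omega> + (1 - t) * X2 \<omega>\<bar> \<le> \<bar>t\<bar> * C1 + \<bar>1 - t\<bar> * C2"
    using c
  proof eventually_elim
    case (elim \<omega>)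
    have "\<bar>t * X1 \<omega> + (1 - t) * X2 \<omega>\<bar> \<le> \<bar>t\<bar> * \<bar>X1 \<omega>\<bar> + \<bar>1 - t\<bar> * \<bar>X2 \<omega>\<bar>"
      by (metis abs_mult abs_triangle_ineq)
    also have "\<dots> \<le> \<bar>t\<bar> * C1 + \<bar>1 - t\<bar> * C2"
      using elim by (intro add_mono mult_left_mono) auto
    finally show ?case .
  qed
  then show ?thesis using m unfolding Linf_def by auto
qed

lemma E_nonneg: "0 \<le> (\<integral>\<omega>. max (X \<omega> - a) (0::real) \<partial>M)"
  by (rule integral_nonneg_AE) auto

lemma E_const: "(\<integral>\<omega>. max (c - a) (0::real) \<partial>M) = max (c - a) 0"
  by (simp add: prob_space)

lemma E_conv:
  assumes "X1 \<in> Linf M" "X2 \<in> Linf M" "0 < t" "t < 1"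
  shows "(\<integral>\<omega>. max ((t * X1 \<omega> + (1 - t) * X2 \<omega>) - (t * a1 + (1 - t) * a2)) 0 \<partial>M)
     \<le> t * (\<integral>\<omega>. max (X1 \<omega> - a1) 0 \<partial>M) + (1 - t) * (\<integral>\<omega>. max (X2 \<omega> - a2) 0 \<partial>M)"
proof -
  have i1: "integrable M (\<lambda>\<omega>. max (X1 \<omega> - a1) 0)" "integrable M (\<lambda>\<omega>. max (X2 \<omega> - a2) 0)"
    using assms Linf_int by auto
  have im: "integrable M (\<lambda>\<omega>. max ((t * X1 \<omega> + (1 - t) * X2 \<omega>) - (t * a1 + (1 - t) * a2)) 0)"
    using Linf_int[OF Linf_mix[OF assms(1,2)], of t "t * a1 + (1 - t) * a2"] by simp
  have "(\<integral>\<omega>. max ((t * X1 \<omega> + (1 - t) * X2 \<omega>) - (t * a1 + (1 - t) * a2)) 0 \<partial>M)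
      \<le> (\<integral>\<omega>. t * max (X1 \<omega> - a1) 0 + (1 - t) * max (X2 \<omega> - a2) 0 \<partial>M)"
  proof (rule integral_mono[OF im])
    show "integrable M (\<lambda>\<omega>. t * max (X1 \<omega> - a1) 0 + (1 - t) * max (X2 \<omega> - a2) 0)"
      using i1 by auto
    fix \<omega>
    have "t * (X1 \<omega> - a1) \<le> t * max (X1 \<omega> - a1) 0" "(1 - t) * (X2 \<omega> - a2) \<le> (1 - t) * max (X2 \<omega> - a2) 0"
      "0 \<le> t * max (X1 \<omega> - a1) 0" "0 \<le> (1 - t) * max (X2 \<omega> - a2) 0"
      using assms by (auto intro!: mult_left_mono)
    moreover have "(t * X1 \<omega> + (1 - t) * X2 \<omega>) - (t * a1 + (1 - t) * a2) = t * (X1 \<omega> - a1) + (1 - t) * (X2 \<omega> - a2)"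
      by (simp add: algebra_simps)
    ultimately show "max ((t * X1 \<omega> + (1 - t) * X2 \<omega>) - (t * a1 + (1 - t) * a2)) 0
      \<le> t * max (X1 \<omega> - a1) 0 + (1 - t) * max (X2 \<omega> - a2) 0"
      by (intro max.boundedI) linarith+
  qed
  also have "\<dots> = t * (\<integral>\<omega>. max (X1 \<omega> - a1) 0 \<partial>M) + (1 - t) * (\<integral>\<omega>. max (X2 \<omega> - a2) 0 \<partial>M)"
    using i1 by simp
  finally show ?thesis .
qed

lemma gen_conv:
  assumes X: "X1 \<in> Linf M" "X2 \<in> Linf M" and t: "0 < t" "t < 1"
    and lm: "\<Lambda> (t * x1 + (1 - t) * x2) = \<Lambda> x1" and l2: "\<Lambda> x2 = \<Lambda> x1"
  shows "T_Lambda M \<Lambda> (t * a1 + (1 - t) * a2) (t * x1 + (1 - t) * x2) (\<lambda>\<omega>. t * X1 \<omega> + (1 - t) * X2 \<omega>)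
    \<le> ereal t * T_Lambda M \<Lambda> a1 x1 X1 + ereal (1 - t) * T_Lambda M \<Lambda> a2 x2 X2"
proof -
  define E1 where "E1 = (\<integral>\<omega>. max (X1 \<omega> - a1) 0 \<partial>M)"
  define E2 where "E2 = (\<integral>\<omega>. max (X2 \<omega> - a2) 0 \<partial>M)"
  define Em where "Em = (\<integral>\<omega>. max ((t * X1 \<omega> + (1 - t) * X2 \<omega>) - (t * a1 + (1 - t) * a2)) 0 \<partial>M)"
  have Em: "Em \<le> t * E1 + (1 - t) * E2" unfolding Em_def E1_def E2_def by (rule E_conv[OF X t])
  have nn: "0 \<le> E1" "0 \<le> E2" "0 \<le> Em" unfolding Em_def E1_def E2_def by (rule E_nonneg)+
  let ?xm = "t * x1 + (1 - t) * x2"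
  let ?am = "t * a1 + (1 - t) * a2"
  show ?thesis
  proof (cases "\<Lambda> x1 < 1")
    case True
    define l where "l = \<Lambda> x1"
    have l: "l < 1" using True l_def by simp
    have "Em / (1 - l) \<le> (t * E1 + (1 - t) * E2) / (1 - l)"
      using Em l by (intro divide_right_mono) auto
    also have "\<dots> = t * (E1 / (1 - l)) + (1 - t) * (E2 / (1 - l))" by (simp add: add_divide_distrib)
    finally have "?am + Em / (1 - l) \<le> t * (a1 + E1 / (1 - l)) + (1 - t) * (a2 + E2 / (1 - l))"
      by (simp add: algebra_simps)
    then have "max (?am + Em / (1 - l)) ?xm \<le> t * max (a1 + E1 / (1 - l)) x1 + (1 - t) * max (a2 + E2 / (1 - l)) x2"
      by (intro max_conv t) auto
    then show ?thesis
      using True lm l2 unfolding l_def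
      by (simp add: T_less1 E1_def[symmetric] E2_def[symmetric] Em_def[symmetric] del: ereal_max)
  next
    case False
    show ?thesis
    proof (cases "E1 = 0 \<and> E2 = 0")
      case True
      then have "Em = 0" using Em nn by simp
      have "max ?am ?xm \<le> t * max a1 x1 + (1 - t) * max a2 x2"
        by (intro max_conv t) auto
      then show ?thesis using False lm l2 True \<open>Em = 0\<close>
        by (simp add: T_not_less1 E1_def[symmetric] E2_def[symmetric] Em_def[symmetric] del: ereal_max)
    next
      case nz: False
      show ?thesis
      proof (cases "E1 = 0")
        case False
        then have T1: "T_Lambda M \<Lambda> a1 x1 X1 = \<infinity>" using \<open>\<not> \<Lambda> x1 < 1\<close> by (simp add: T_not_less1 E1_def)
        have "ereal t * T_Lambda M \<Lambda> a1 x1 X1 + ereal (1 - t) * T_Lambda M \<Lambda> a2 x2 X2 = \<infinity>"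
          unfolding T1 by (rule conv_top1[OF t T_not_MInf])
        then show ?thesis by (metis ereal_less_eq(1))
      next
        case True
        then have "E2 \<noteq> 0" using nz by simp
        then have T2: "T_Lambda M \<Lambda> a2 x2 X2 = \<infinity>" using \<open>\<not> \<Lambda> x1 < 1\<close> l2 by (simp add: T_not_less1 E2_def)
        have "ereal t * T_Lambda M \<Lambda> a1 x1 X1 + ereal (1 - t) * T_Lambda M \<Lambda> a2 x2 X2 = \<infinity>"
          unfolding T2 by (rule conv_top2[OF t T_not_MInf])
        then show ?thesis by (metis ereal_less_eq(1))
      qed
    qed
  qed
qed

lemma part_i:
  "\<forall>x a1 a2 X1 X2 t. X1 \<in> Linf M \<and> X2 \<in> Linf M \<and> 0 < t \<and> t < 1 \<longrightarrow>
        T_Lambda M \<Lambda> (t * a1 + (1 - t) * a2) x (\<lambda>\<omega>. t * X1 \<omega> + (1 - t) * X2 \<omega>)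
          \<le> ereal t * T_Lambda M \<Lambda> a1 x X1 + ereal (1 - t) * T_Lambda M \<Lambda> a2 x X2"
proof (intro allI impI)
  fix x a1 a2 X1 X2 and t :: real
  assume a: "X1 \<in> Linf M \<and> X2 \<in> Linf M \<and> 0 < t \<and> t < 1"
  have eq: "t * x + (1 - t) * x = x" by (simp add: algebra_simps)
  show "T_Lambda M \<Lambda> (t * a1 + (1 - t) * a2) x (\<lambda>\<omega>. t * X1 \<omega> + (1 - t) * X2 \<omega>)
          \<le> ereal t * T_Lambda M \<Lambda> a1 x X1 + ereal (1 - t) * T_Lambda M \<Lambda> a2 x X2"
    using gen_conv[of X1 X2 t \<Lambda> x x a1 a2] a unfolding eq by simp
qed

lemma T_const: "T_Lambda M \<Lambda> a z (\<lambda>\<omega>. c) = (if \<Lambda> z < 1 then ereal (max (a + max (c - a) 0 / (1 - \<Lambda> z)) z)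
   else if max (c - a) 0 = 0 then ereal (max a z) else \<infinity>)"
  unfolding T_Lambda_def Let_def E_const by auto

lemma g_of_convex:
  assumes g: "ereal_convex (inv_one_minus \<Lambda>)" and x: "\<Lambda> x < 1" and y: "\<Lambda> y < 1" and t: "0 < t" "t < 1"
  shows "\<Lambda> (t * x + (1 - t) * y) < 1 \<and>
    1 / (1 - \<Lambda> (t * x + (1 - t) * y)) \<le> t * (1 / (1 - \<Lambda> x)) + (1 - t) * (1 / (1 - \<Lambda> y))"
proof -
  have "inv_one_minus \<Lambda> (t * x + (1 - t) * y) \<le> ereal t * inv_one_minus \<Lambda> x + ereal (1 - t) * inv_one_minus \<Lambda> y"
    using g t unfolding ereal_convex_def by blast
  also have "\<dots> = ereal (t * (1 / (1 - \<Lambda> x)) + (1 - t) * (1 / (1 - \<Lambda> y)))"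
    using x y by (simp add: inv_one_minus_def)
  finally show ?thesis unfolding inv_one_minus_def by (auto split: if_splits)
qed

lemma part_ii_bwd:
  assumes g: "ereal_convex (inv_one_minus \<Lambda>)" and X: "X \<in> Linf M"
  shows "ereal_convex (\<lambda>x. T_Lambda M \<Lambda> a x X)"
  unfolding ereal_convex_def
proof (intro allI impI)
  fix x y t :: real assume t: "0 < t \<and> t < 1"
  define E where "E = (\<integral>\<omega>. max (X \<omega> - a) 0 \<partial>M)"
  have E0: "0 \<le> E" unfolding E_def by (rule E_nonneg)
  let ?m = "t * x + (1 - t) * y"
  show "T_Lambda M \<Lambda> a ?m X \<le> ereal t * T_Lambda M \<Lambda> a x X + ereal (1 - t) * T_Lambda M \<Lambda> a y X"
  proof (cases "\<Lambda> x < 1 \<and> \<Lambda> y < 1")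
    case True
    then have gm: "\<Lambda> ?m < 1" "1 / (1 - \<Lambda> ?m) \<le> t * (1 / (1 - \<Lambda> x)) + (1 - t) * (1 / (1 - \<Lambda> y))"
      using g_of_convex[OF g _ _ ] t by blast+
    have "E * (1 / (1 - \<Lambda> ?m)) \<le> E * (t * (1 / (1 - \<Lambda> x)) + (1 - t) * (1 / (1 - \<Lambda> y)))"
      using gm E0 by (intro mult_left_mono) auto
    then have "a + E / (1 - \<Lambda> ?m) \<le> t * (a + E / (1 - \<Lambda> x)) + (1 - t) * (a + E / (1 - \<Lambda> y))"
      by (simp add: algebra_simps)
    then have "max (a + E / (1 - \<Lambda> ?m)) ?m \<le> t * max (a + E / (1 - \<Lambda> x)) x + (1 - t) * max (a + E / (1 - \<Lambda> y)) y"
      using t by (intro max_conv) auto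
    then show ?thesis using True gm by (simp add: T_less1 E_def[symmetric] del: ereal_max)
  next
    case False
    show ?thesis
    proof (cases "E = 0")
      case True
      have "max a ?m \<le> t * max a x + (1 - t) * max a y" using t by (intro max_conv) (auto simp: algebra_simps)
      moreover have "T_Lambda M \<Lambda> a z X = ereal (max a z)" for z
        using True by (cases "\<Lambda> z < 1") (simp_all add: T_less1 T_not_less1 E_def[symmetric] del: ereal_max)
      ultimately show ?thesis by (simp del: ereal_max)
    next
      case E: False
      show ?thesis
      proof (cases "\<Lambda> x < 1")
        case True
        then have "\<not> \<Lambda> y < 1" using False by simp
        then have T2: "T_Lambda M \<Lambda> a y X = \<infinity>" using E by (simp add: T_not_less1 E_def)
        have "ereal t * T_Lambda M \<Lambda> a x X + ereal (1 - t) * T_Lambda M \<Lambda> a y X = \<infinity>"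
          unfolding T2 using t by (intro conv_top2 T_not_MInf) auto
        then show ?thesis by (metis ereal_less_eq(1))
      next
        case False
        then have T1: "T_Lambda M \<Lambda> a x X = \<infinity>" using E by (simp add: T_not_less1 E_def)
        have "ereal t * T_Lambda M \<Lambda> a x X + ereal (1 - t) * T_Lambda M \<Lambda> a y X = \<infinity>"
          unfolding T1 using t by (intro conv_top1 T_not_MInf) auto
        then show ?thesis by (metis ereal_less_eq(1))
      qed
    qed
  qed
qed

lemma part_ii_fwd:
  assumes range: "\<And>x. 0 \<le> \<Lambda> x \<and> \<Lambda> x \<le> 1"
    and cv: "\<forall>a. \<forall>X\<in>Linf M. ereal_convex (\<lambda>x. T_Lambda M \<Lambda> a x X)"
  shows "ereal_convex (inv_one_minus \<Lambda>)"
  unfolding ereal_convex_def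
proof (intro allI impI)
  fix x y t :: real assume t: "0 < t \<and> t < 1"
  let ?m = "t * x + (1 - t) * y"
  let ?g = "inv_one_minus \<Lambda>"
  have gnm: "?g z \<noteq> -\<infinity>" for z by (simp add: inv_one_minus_def)
  show "?g ?m \<le> ereal t * ?g x + ereal (1 - t) * ?g y"
  proof (cases "\<Lambda> x < 1 \<and> \<Lambda> y < 1")
    case True
    define gx where "gx = 1 / (1 - \<Lambda> x)"
    define gy where "gy = 1 / (1 - \<Lambda> y)"
    have g1: "1 \<le> gx" "1 \<le> gy" using True range[of x] range[of y] by (auto simp: gx_def gy_def)
    define c where "c = max x y + 1"
    define a where "a = c - 1"
    have ca: "max (c - a) 0 = 1" by (simp add: a_def)
    have xa: "x \<le> a + gx" "y \<le> a + gy" using g1 by (auto simp: a_def c_def)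
    have "T_Lambda M \<Lambda> a x (\<lambda>\<omega>. c) = ereal (max (a + gx) x)"
      using True by (simp add: T_const ca gx_def del: ereal_max)
    then have Tx: "T_Lambda M \<Lambda> a x (\<lambda>\<omega>. c) = ereal (a + gx)" using xa by simp
    have "T_Lambda M \<Lambda> a y (\<lambda>\<omega>. c) = ereal (max (a + gy) y)"
      using True by (simp add: T_const ca gy_def del: ereal_max)
    then have Ty: "T_Lambda M \<Lambda> a y (\<lambda>\<omega>. c) = ereal (a + gy)" using xa by simp
    have "T_Lambda M \<Lambda> a ?m (\<lambda>\<omega>. c) \<le> ereal t * T_Lambda M \<Lambda> a x (\<lambda>\<omega>. c) + ereal (1 - t) * T_Lambda M \<Lambda> a y (\<lambda>\<omega>. c)"
      using cv Linf_const t unfolding ereal_convex_def by blast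
    also have "\<dots> = ereal (t * (a + gx) + (1 - t) * (a + gy))" unfolding Tx Ty by simp
    finally have le: "T_Lambda M \<Lambda> a ?m (\<lambda>\<omega>. c) \<le> ereal (t * (a + gx) + (1 - t) * (a + gy))" .
    have lm: "\<Lambda> ?m < 1"
    proof (rule ccontr)
      assume "\<not> \<Lambda> ?m < 1"
      then have "T_Lambda M \<Lambda> a ?m (\<lambda>\<omega>. c) = \<infinity>" by (simp add: T_const ca)
      then show False using le by simp
    qed
    then have "a + 1 / (1 - \<Lambda> ?m) \<le> t * (a + gx) + (1 - t) * (a + gy)"
      using le by (simp add: T_const ca del: ereal_max)
    then have "1 / (1 - \<Lambda> ?m) \<le> t * gx + (1 - t) * gy" by (simp add: algebra_simps)
    then show ?thesis using lm True by (simp add: inv_one_minus_def gx_def gy_def)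
  next
    case False
    show ?thesis
    proof (cases "\<Lambda> x < 1")
      case True
      then have "?g y = \<infinity>" using False by (simp add: inv_one_minus_def)
      moreover have "ereal t * ?g x + ereal (1 - t) * \<infinity> = \<infinity>" using t gnm by (intro conv_top2) auto
      ultimately show ?thesis by (metis ereal_less_eq(1))
    next
      case False
      then have "?g x = \<infinity>" by (simp add: inv_one_minus_def)
      moreover have "ereal t * \<infinity> + ereal (1 - t) * ?g y = \<infinity>" using t gnm by (intro conv_top1) auto
      ultimately show ?thesis by (metis ereal_less_eq(1))
    qed
  qed
qed

lemma mixX: "(\<lambda>\<omega>. t * X \<omega> + (1 - t) * X \<omega>) = (X :: 'a \<Rightarrow> real)"
  by (rule ext) (simp add: algebra_simps)

lemma cb_ce:
  assumes range: "\<And>x. 0 \<le> \<Lambda> x \<and> \<Lambda> x \<le> 1" and decr: "antimono \<Lambda>"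
    and cb: "\<forall>X\<in>Linf M. \<forall>a1 a2 x1 x2 t. 0 < t \<and> t < 1 \<longrightarrow>
               T_Lambda M \<Lambda> (t * a1 + (1 - t) * a2) (t * x1 + (1 - t) * x2) X
                 \<le> max (T_Lambda M \<Lambda> a1 x1 X) (T_Lambda M \<Lambda> a2 x2 X)"
  shows "\<exists>c. \<forall>x. \<Lambda> x = c"
proof (rule ccontr)
  assume "\<not> ?thesis"
  then obtain p0 q0 where "\<Lambda> p0 \<noteq> \<Lambda> q0" by metis
  then obtain p q where pq: "p < q" "\<Lambda> q < \<Lambda> p"
  proof (cases "p0 < q0")
    case True
    then have "\<Lambda> q0 \<le> \<Lambda> p0" using decr by (simp add: antimonoD)
    then show ?thesis using that[of p0 q0] True \<open>\<Lambda> p0 \<noteq> \<Lambda> q0\<close> by simp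
  next
    case False
    then have "q0 < p0" using \<open>\<Lambda> p0 \<noteq> \<Lambda> q0\<close> by (metis linorder_neqE_linordered_idom)
    then have "\<Lambda> p0 \<le> \<Lambda> q0" using decr by (simp add: antimonoD)
    then show ?thesis using that[of q0 p0] \<open>q0 < p0\<close> \<open>\<Lambda> p0 \<noteq> \<Lambda> q0\<close> by simp
  qed
  have lq: "\<Lambda> q < 1" using pq range[of p] by simp
  define g2 where "g2 = 1 / (1 - \<Lambda> q)"
  have g2: "1 \<le> g2" using lq range[of q] by (simp add: g2_def)
  define c where "c = q"
  obtain s where s: "0 < s" "s < 1" and sgood: "\<Lambda> p < 1 \<Longrightarrow> g2 - 1 < (1 - s) * (1 / (1 - \<Lambda> p) - 1)"
  proof (cases "\<Lambda> p < 1")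
    case True
    define g1 where "g1 = 1 / (1 - \<Lambda> p)"
    have g12: "g2 < g1" using pq True range[of q] by (simp add: g1_def g2_def divide_strict_left_mono frac_less2)
    define r where "r = (g2 - 1) / (g1 - 1)"
    have r: "0 \<le> r" "r < 1" using g12 g2 by (auto simp: r_def)
    have "g2 - 1 = r * (g1 - 1)" using g12 g2 by (simp add: r_def)
    also have "\<dots> < (1 - (1 - r) / 2) * (g1 - 1)" using r g12 g2 by (intro mult_strict_right_mono) (auto simp: field_simps)
    finally show ?thesis using that[of "(1 - r) / 2"] r unfolding g1_def by auto
  next
    case False
    then show ?thesis using that[of "1/2"] by auto
  qed
  define z where "z = (p - (1 - s) * q) / s"
  have zp: "s * z + (1 - s) * q = p" using s by (simp add: z_def)
  have zle: "z \<le> p"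
  proof -
    have "s * z = s * p + (1 - s) * (p - q)" using zp by (simp add: algebra_simps)
    moreover have "(1 - s) * (p - q) \<le> 0" using s pq by (intro mult_nonneg_nonpos) auto
    ultimately have "s * z \<le> s * p" by simp
    then show ?thesis using s by simp
  qed
  have am: "s * c + (1 - s) * (c - 1) = c - (1 - s)" by (simp add: algebra_simps)
  have inst: "T_Lambda M \<Lambda> (s * c + (1 - s) * (c - 1)) (s * z + (1 - s) * q) (\<lambda>\<omega>. c)
       \<le> max (T_Lambda M \<Lambda> c z (\<lambda>\<omega>. c)) (T_Lambda M \<Lambda> (c - 1) q (\<lambda>\<omega>. c))"
    using cb Linf_const s by blast
  have T1: "T_Lambda M \<Lambda> c z (\<lambda>\<omega>. c) = ereal c"
    using zle pq by (simp add: T_const c_def del: ereal_max)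
  have T2: "T_Lambda M \<Lambda> (c - 1) q (\<lambda>\<omega>. c) = ereal (c - 1 + g2)"
    using lq g2 by (simp add: T_const c_def g2_def del: ereal_max)
  have mx: "max (T_Lambda M \<Lambda> c z (\<lambda>\<omega>. c)) (T_Lambda M \<Lambda> (c - 1) q (\<lambda>\<omega>. c)) = ereal (c - 1 + g2)"
    unfolding T1 T2 using g2 by simp
  have Tm: "ereal (c - 1 + g2) < T_Lambda M \<Lambda> (c - (1 - s)) p (\<lambda>\<omega>. c)"
  proof (cases "\<Lambda> p < 1")
    case True
    have "c - 1 + g2 < c - (1 - s) + (1 - s) / (1 - \<Lambda> p)"
      using sgood[OF True] by (simp add: algebra_simps)
    then show ?thesis using True s by (simp add: T_const del: ereal_max)
  next
    case False
    then show ?thesis using s by (simp add: T_const)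
  qed
  show False using inst Tm unfolding am zp mx by simp
qed

end

theorem theorem4:
  fixes M :: "'a measure" and \<Lambda> :: "real \<Rightarrow> real"
  assumes P: "prob_space M"
    and atomless: "atomless M"
    and range: "\<And>x. 0 \<le> \<Lambda> x \<and> \<Lambda> x \<le> 1"
    and decr: "antimono \<Lambda>"
    and rcont: "\<And>x. continuous (at_right x) \<Lambda>"
  shows
    \<comment> \<open>minimisation formula and minimisers\<close>
    "(\<forall>X\<in>Linf M.
        (\<forall>a x. ereal (ES_Lambda M \<Lambda> X) \<le> T_Lambda M \<Lambda> a x X)
      \<and> (\<exists>a x. T_Lambda M \<Lambda> a x X = ereal (ES_Lambda M \<Lambda> X))
      \<and> (\<Lambda> (ES_Lambda M \<Lambda> X) < 1 \<longrightarrow>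
           (\<forall>a. VaR M X (\<Lambda> (ES_Lambda M \<Lambda> X)) \<le> ereal a
                \<and> ereal a \<le> VaRp M X (\<Lambda> (ES_Lambda M \<Lambda> X)) \<longrightarrow>
                T_Lambda M \<Lambda> a (ES_Lambda M \<Lambda> X) X = ereal (ES_Lambda M \<Lambda> X)))
      \<and> (\<Lambda> (ES_Lambda M \<Lambda> X) = 1 \<longrightarrow>
           T_Lambda M \<Lambda> (real_of_ereal (VaR M X 1)) (ES_Lambda M \<Lambda> X) X
             = ereal (ES_Lambda M \<Lambda> X)))
   \<and>
    \<comment> \<open>(i) joint convexity in (a,X) for every x\<close>
    (\<forall>x a1 a2 X1 X2 t. X1 \<in> Linf M \<and> X2 \<in> Linf M \<and> 0 < t \<and> t < 1 \<longrightarrow>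
        T_Lambda M \<Lambda> (t * a1 + (1 - t) * a2) x (\<lambda>\<omega>. t * X1 \<omega> + (1 - t) * X2 \<omega>)
          \<le> ereal t * T_Lambda M \<Lambda> a1 x X1 + ereal (1 - t) * T_Lambda M \<Lambda> a2 x X2)
   \<and>
    \<comment> \<open>(ii) convexity in x iff 1/(1-\<Lambda>) convex\<close>
    ((\<forall>a. \<forall>X\<in>Linf M. ereal_convex (\<lambda>x. T_Lambda M \<Lambda> a x X))
       \<longleftrightarrow> ereal_convex (inv_one_minus \<Lambda>))
   \<and>
    \<comment> \<open>(iii) (a),(b),(c),(d) are each equivalent to (e)\<close>
    (let
       ca = (\<forall>X\<in>Linf M. \<forall>a1 a2 x1 x2 t. 0 < t \<and> t < 1 \<longrightarrow>
               T_Lambda M \<Lambda> (t * a1 + (1 - t) * a2) (t * x1 + (1 - t) * x2) X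
                 \<le> ereal t * T_Lambda M \<Lambda> a1 x1 X + ereal (1 - t) * T_Lambda M \<Lambda> a2 x2 X);
       cb = (\<forall>X\<in>Linf M. \<forall>a1 a2 x1 x2 t. 0 < t \<and> t < 1 \<longrightarrow>
               T_Lambda M \<Lambda> (t * a1 + (1 - t) * a2) (t * x1 + (1 - t) * x2) X
                 \<le> max (T_Lambda M \<Lambda> a1 x1 X) (T_Lambda M \<Lambda> a2 x2 X));
       cc = (\<forall>X1\<in>Linf M. \<forall>X2\<in>Linf M. \<forall>a1 a2 x1 x2 t. 0 < t \<and> t < 1 \<longrightarrow>
               T_Lambda M \<Lambda> (t * a1 + (1 - t) * a2) (t * x1 + (1 - t) * x2)
                   (\<lambda>\<omega>. t * X1 \<omega> + (1 - t) * X2 \<omega>)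
                 \<le> ereal t * T_Lambda M \<Lambda> a1 x1 X1 + ereal (1 - t) * T_Lambda M \<Lambda> a2 x2 X2);
       cd = (\<forall>X1\<in>Linf M. \<forall>X2\<in>Linf M. \<forall>a1 a2 x1 x2 t. 0 < t \<and> t < 1 \<longrightarrow>
               T_Lambda M \<Lambda> (t * a1 + (1 - t) * a2) (t * x1 + (1 - t) * x2)
                   (\<lambda>\<omega>. t * X1 \<omega> + (1 - t) * X2 \<omega>)
                 \<le> max (T_Lambda M \<Lambda> a1 x1 X1) (T_Lambda M \<Lambda> a2 x2 X2));
       ce = (\<exists>c. \<forall>x. \<Lambda> x = c)
     in (ca \<longleftrightarrow> ce) \<and> (cb \<longleftrightarrow> ce) \<and> (cc \<longleftrightarrow> ce) \<and> (cd \<longleftrightarrow> ce))"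
proof -
  interpret prob_space M by (rule P)
  have main: "\<forall>X\<in>Linf M.
        (\<forall>a x. ereal (ES_Lambda M \<Lambda> X) \<le> T_Lambda M \<Lambda> a x X)
      \<and> (\<exists>a x. T_Lambda M \<Lambda> a x X = ereal (ES_Lambda M \<Lambda> X))
      \<and> (\<Lambda> (ES_Lambda M \<Lambda> X) < 1 \<longrightarrow>
           (\<forall>a. VaR M X (\<Lambda> (ES_Lambda M \<Lambda> X)) \<le> ereal a
                \<and> ereal a \<le> VaRp M X (\<Lambda> (ES_Lambda M \<Lambda> X)) \<longrightarrow>
                T_Lambda M \<Lambda> a (ES_Lambda M \<Lambda> X) X = ereal (ES_Lambda M \<Lambda> X)))
      \<and> (\<Lambda> (ES_Lambda M \<Lambda> X) = 1 \<longrightarrow>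
           T_Lambda M \<Lambda> (real_of_ereal (VaR M X 1)) (ES_Lambda M \<Lambda> X) X
             = ereal (ES_Lambda M \<Lambda> X))"
  proof
    fix X assume "X \<in> Linf M"
    then obtain C where q: "qctx M X C" using Linf_qctx by blast
    interpret lctx M X C \<Lambda>
      using q range decr rcont by (simp add: lctx_def lctx_axioms_def)
    show "(\<forall>a x. ereal (ES_Lambda M \<Lambda> X) \<le> T_Lambda M \<Lambda> a x X)
      \<and> (\<exists>a x. T_Lambda M \<Lambda> a x X = ereal (ES_Lambda M \<Lambda> X))
      \<and> (\<Lambda> (ES_Lambda M \<Lambda> X) < 1 \<longrightarrow>
           (\<forall>a. VaR M X (\<Lambda> (ES_Lambda M \<Lambda> X)) \<le> ereal a
                \<and> ereal a \<le> VaRp M X (\<Lambda> (ES_Lambda M \<Lambda> X)) \<longrightarrow>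
                T_Lambda M \<Lambda> a (ES_Lambda M \<Lambda> X) X = ereal (ES_Lambda M \<Lambda> X)))
      \<and> (\<Lambda> (ES_Lambda M \<Lambda> X) = 1 \<longrightarrow>
           T_Lambda M \<Lambda> (real_of_ereal (VaR M X 1)) (ES_Lambda M \<Lambda> X) X
             = ereal (ES_Lambda M \<Lambda> X))"
      by (rule main_part)
  qed
  have ii: "(\<forall>a. \<forall>X\<in>Linf M. ereal_convex (\<lambda>x. T_Lambda M \<Lambda> a x X))
       \<longleftrightarrow> ereal_convex (inv_one_minus \<Lambda>)"
    using part_ii_fwd[of \<Lambda>, OF range] part_ii_bwd[of \<Lambda>] by blast
  define ca where "ca = (\<forall>X\<in>Linf M. \<forall>a1 a2 x1 x2 t. 0 < t \<and> t < 1 \<longrightarrow>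
               T_Lambda M \<Lambda> (t * a1 + (1 - t) * a2) (t * x1 + (1 - t) * x2) X
                 \<le> ereal t * T_Lambda M \<Lambda> a1 x1 X + ereal (1 - t) * T_Lambda M \<Lambda> a2 x2 X)"
  define cb where "cb = (\<forall>X\<in>Linf M. \<forall>a1 a2 x1 x2 t. 0 < t \<and> t < 1 \<longrightarrow>
               T_Lambda M \<Lambda> (t * a1 + (1 - t) * a2) (t * x1 + (1 - t) * x2) X
                 \<le> max (T_Lambda M \<Lambda> a1 x1 X) (T_Lambda M \<Lambda> a2 x2 X))"
  define cc where "cc = (\<forall>X1\<in>Linf M. \<forall>X2\<in>Linf M. \<forall>a1 a2 x1 x2 t. 0 < t \<and> t < 1 \<longrightarrow>
               T_Lambda M \<Lambda> (t * a1 + (1 - t) * a2) (t * x1 + (1 - t) * x2)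
                   (\<lambda>\<omega>. t * X1 \<omega> + (1 - t) * X2 \<omega>)
                 \<le> ereal t * T_Lambda M \<Lambda> a1 x1 X1 + ereal (1 - t) * T_Lambda M \<Lambda> a2 x2 X2)"
  define cd where "cd = (\<forall>X1\<in>Linf M. \<forall>X2\<in>Linf M. \<forall>a1 a2 x1 x2 t. 0 < t \<and> t < 1 \<longrightarrow>
               T_Lambda M \<Lambda> (t * a1 + (1 - t) * a2) (t * x1 + (1 - t) * x2)
                   (\<lambda>\<omega>. t * X1 \<omega> + (1 - t) * X2 \<omega>)
                 \<le> max (T_Lambda M \<Lambda> a1 x1 X1) (T_Lambda M \<Lambda> a2 x2 X2))"
  define ce where "ce = (\<exists>c. \<forall>x. \<Lambda> x = c)"
  have ce_cc: "ce \<Longrightarrow> cc"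
    unfolding ce_def cc_def
  proof (intro ballI allI impI)
    fix X1 X2 a1 a2 x1 x2 and t :: real
    assume "\<exists>c. \<forall>x. \<Lambda> x = c" "X1 \<in> Linf M" "X2 \<in> Linf M" "0 < t \<and> t < 1"
    then show "T_Lambda M \<Lambda> (t * a1 + (1 - t) * a2) (t * x1 + (1 - t) * x2)
                   (\<lambda>\<omega>. t * X1 \<omega> + (1 - t) * X2 \<omega>)
                 \<le> ereal t * T_Lambda M \<Lambda> a1 x1 X1 + ereal (1 - t) * T_Lambda M \<Lambda> a2 x2 X2"
      by (intro gen_conv) auto
  qed
  have cc_ca: "cc \<Longrightarrow> ca"
    unfolding cc_def ca_def
  proof (intro ballI allI impI)
    fix X a1 a2 x1 x2 and t :: real
    assume h: "\<forall>X1\<in>Linf M. \<forall>X2\<in>Linf M. \<forall>a1 a2 x1 x2 t. 0 < t \<and> t < 1 \<longrightarrow>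
               T_Lambda M \<Lambda> (t * a1 + (1 - t) * a2) (t * x1 + (1 - t) * x2)
                   (\<lambda>\<omega>. t * X1 \<omega> + (1 - t) * X2 \<omega>)
                 \<le> ereal t * T_Lambda M \<Lambda> a1 x1 X1 + ereal (1 - t) * T_Lambda M \<Lambda> a2 x2 X2"
      and X: "X \<in> Linf M" and t: "0 < t \<and> t < 1"
    show "T_Lambda M \<Lambda> (t * a1 + (1 - t) * a2) (t * x1 + (1 - t) * x2) X
                 \<le> ereal t * T_Lambda M \<Lambda> a1 x1 X + ereal (1 - t) * T_Lambda M \<Lambda> a2 x2 X"
      using h[rule_format, OF X X t, of a1 a2 x1 x2] unfolding mixX .
  qed
  have cd_cb: "cd \<Longrightarrow> cb"
    unfolding cd_def cb_def
  proof (intro ballI allI impI)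
    fix X a1 a2 x1 x2 and t :: real
    assume h: "\<forall>X1\<in>Linf M. \<forall>X2\<in>Linf M. \<forall>a1 a2 x1 x2 t. 0 < t \<and> t < 1 \<longrightarrow>
               T_Lambda M \<Lambda> (t * a1 + (1 - t) * a2) (t * x1 + (1 - t) * x2)
                   (\<lambda>\<omega>. t * X1 \<omega> + (1 - t) * X2 \<omega>)
                 \<le> max (T_Lambda M \<Lambda> a1 x1 X1) (T_Lambda M \<Lambda> a2 x2 X2)"
      and X: "X \<in> Linf M" and t: "0 < t \<and> t < 1"
    show "T_Lambda M \<Lambda> (t * a1 + (1 - t) * a2) (t * x1 + (1 - t) * x2) X
                 \<le> max (T_Lambda M \<Lambda> a1 x1 X) (T_Lambda M \<Lambda> a2 x2 X)"
      using h[rule_format, OF X X t, of a1 a2 x1 x2] unfolding mixX .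
  qed
  have cc_cd: "cc \<Longrightarrow> cd"
    unfolding cc_def cd_def
    by (meson conv_le_max T_not_MInf order_trans)
  have ca_cb: "ca \<Longrightarrow> cb"
    unfolding ca_def cb_def
    by (meson conv_le_max T_not_MInf order_trans)
  have cb_ce': "cb \<Longrightarrow> ce"
    unfolding cb_def ce_def using cb_ce[of \<Lambda>, OF range decr] by blast
  have iii: "(ca \<longleftrightarrow> ce) \<and> (cb \<longleftrightarrow> ce) \<and> (cc \<longleftrightarrow> ce) \<and> (cd \<longleftrightarrow> ce)"
    using ce_cc cc_ca cd_cb cc_cd ca_cb cb_ce' by blast
  show ?thesis
    unfolding Let_def ca_def[symmetric] cb_def[symmetric] cc_def[symmetric] cd_def[symmetric] ce_def[symmetric]
    using main part_i ii iii by blast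
qed

end
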